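(* Let $k\in\mathbb Z$, $\mathbb N_k=\{l\in\mathbb Z:l\le k\}$, and $\xi$ a random variable with $\mathbb P(\xi=l)=p_l$, $l\in\mathbb N_k$, $p_l\ge0$, $\sum_lp_l=1$, $p_k\in(0,1)$. Let $r_i=\sum_{j\le k-i}p_j$ for integers $i\ge1$. Fix $N\ge1$, let $Z$ be the Markov chain on $\Omega_k$ described in the context, $\bar\nu_N$ its invariant distribution and $\phi(m)=\sup\{i\in\mathbb N_k:m_i>0\}$. Then for each $i\ge2$, $$\bar\nu_N(\phi\le k-i)\le\Big(\frac{r_i}{r_1}\Big)^N\bar\nu_N(\phi\le k-1).$$
   Context: $\Omega_k=\{m\in\{0,\dots,N\}^{\mathbb N_k}:\sum_{i\in\mathbb N_k}m_i=N\}$. The chain $Z$ on $\Omega_k$ has the kernel: from state $m$, take any $x\in\mathbb Z^N$ with exactly $m_l$ coordinates equal to $l$ for each $l\in\mathbb N_k$, let $\{\xi_{i,j}:1\le i,j\le N\}$ be fresh i.i.d. copies of $\xi$, and let the next state be $\big(\#\{i\le N:\max_j(x_j+\xi_{i,j})=\phi(m)+l\}\big)_{l\in\mathbb N_k}$. (Equivalently, $Z_l(t)=\#\{j:X_j(t)=\max_iX_i(t-1)+l\}$ for the particle system $X_i(t+1)=\max_j\{X_j(t)+\xi_{i,j}(t+1)\}$.) $\bar\nu_N$ is its unique invariant probability distribution. *)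

theory Defs
  imports "HOL-Probability.Probability"
begin

text \<open>States: configurations m indexed by N_k = {l. l \<le> k}; extended by 0 above k.\<close>
definition Omega :: "int \<Rightarrow> nat \<Rightarrow> (int \<Rightarrow> nat) set" where
  "Omega k N = {m. (\<forall>l. m l \<le> N) \<and> (\<forall>l. l > k \<longrightarrow> m l = 0)
                  \<and> finite {l. m l \<noteq> 0} \<and> (\<Sum>l\<in>{l. m l \<noteq> 0}. m l) = N}"

definition phi :: "int \<Rightarrow> (int \<Rightarrow> nat) \<Rightarrow> int" where
  "phi k m = Max {l. l \<le> k \<and> m l > 0}"

text \<open>A particle configuration x in Z^N (coordinates 0..N-1) with exactly m_l coordinates equal to l.\<close>
definition config :: "nat \<Rightarrow> (int \<Rightarrow> nat) \<Rightarrow> nat \<Rightarrow> int" where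
  "config N m = (SOME x. \<forall>l. card {j\<in>{0..<N}. x j = l} = m l)"

definition Z_step :: "int pmf \<Rightarrow> int \<Rightarrow> nat \<Rightarrow> (int \<Rightarrow> nat) \<Rightarrow> (int \<Rightarrow> nat) pmf" where
  "Z_step xi k N m =
     map_pmf (\<lambda>e. \<lambda>l. if l \<le> k then
                card {i\<in>{0..<N}. Max ((\<lambda>j. config N m j + e (i, j)) ` {0..<N}) = phi k m + l}
              else 0)
       (Pi_pmf ({0..<N} \<times> {0..<N}) 0 (\<lambda>_. xi))"

definition invariant_Z :: "int pmf \<Rightarrow> int \<Rightarrow> nat \<Rightarrow> (int \<Rightarrow> nat) pmf \<Rightarrow> bool" where
  "invariant_Z xi k N \<nu> \<longleftrightarrow> set_pmf \<nu> \<subseteq> Omega k N \<and> bind_pmf \<nu> (Z_step xi k N) = \<nu>"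

definition r :: "int pmf \<Rightarrow> int \<Rightarrow> int \<Rightarrow> real" where
  "r xi k i = measure_pmf.prob xi {..k - i}"

end

theory Submission imports Defs begin

lemma config_exists:
  assumes "m \<in> Omega k N"
  shows "\<exists>x::nat\<Rightarrow>int. \<forall>l. card {j\<in>{0..<N}. x j = l} = m l"
proof -
  from assms have fin: "finite {l. m l \<noteq> 0}" and sm: "(\<Sum>l\<in>{l. m l \<noteq> 0}. m l) = N"
    by (auto simp: Omega_def)
  have fin0: "finite {x. m x > 0}" using fin by simp
  define M where "M = Abs_multiset m"
  have cM: "count M = m" using fin0 by (simp add: M_def count_Abs_multiset)
  obtain xs where xs: "mset xs = M" using ex_mset by blast
  have "size M = N"
  proof -
    have "size M = sum (count M) (set_mset M)" by (rule size_multiset_overloaded_eq)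
    also have "set_mset M = {l. m l \<noteq> 0}" using cM by (auto simp: set_mset_def)
    finally show ?thesis using sm cM by simp
  qed
  hence len: "length xs = N" using xs by (metis size_mset)
  show ?thesis
  proof (intro exI allI)
    fix l
    have "card {j\<in>{0..<N}. xs ! j = l} = card {j. j < length xs \<and> xs ! j = l}"
      using len by (intro arg_cong[where f=card]) auto
    also have "\<dots> = length (filter (\<lambda>y. y = l) xs)" by (simp add: length_filter_conv_card)
    also have "\<dots> = count (mset xs) l" proof -
      have "(\<lambda>y. y = l) = (=) l" by auto
      thus ?thesis by (simp add: count_mset count_list_eq_length_filter)
    qed
    finally show "card {j\<in>{0..<N}. xs ! j = l} = m l" using xs cM by simp
  qed
qed

lemma config_ok:
  assumes "m \<in> Omega k N"
  shows "card {j\<in>{0..<N}. config N m j = l} = m l"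
  using someI_ex[OF config_exists[OF assms]] unfolding config_def by blast

lemma config_props:
  assumes m: "m \<in> Omega k N" and N: "N \<ge> 1"
  shows "\<forall>b<N. config N m b \<le> phi k m" "\<exists>b0<N. config N m b0 = phi k m"
proof -
  let ?x = "config N m"
  have fin: "finite {l. m l \<noteq> 0}" and sm: "(\<Sum>l\<in>{l. m l \<noteq> 0}. m l) = N"
    and zk: "\<And>l. l > k \<Longrightarrow> m l = 0"
    using m by (auto simp: Omega_def)
  have finS: "finite {l. l \<le> k \<and> m l > 0}" by (rule finite_subset[OF _ fin]) auto
  show "\<forall>b<N. ?x b \<le> phi k m"
  proof (intro allI impI)
    fix b assume b: "b < N"
    have "card {j\<in>{0..<N}. ?x j = ?x b} > 0"
      using b by (subst card_gt_0_iff) auto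
    hence "m (?x b) > 0" using config_ok[OF m] by simp
    hence "?x b \<in> {l. l \<le> k \<and> m l > 0}" using zk by (metis gr_implies_not0 mem_Collect_eq not_le)
    thus "?x b \<le> phi k m" unfolding phi_def using finS by simp
  qed
  have "{l. m l \<noteq> 0} \<noteq> {}" using sm N by (metis not_one_le_zero sum.empty)
  then obtain l0 where "m l0 \<noteq> 0" by auto
  hence ne: "{l. l \<le> k \<and> m l > 0} \<noteq> {}" using zk by (metis (mono_tags) empty_iff gr0I mem_Collect_eq not_le)
  have "phi k m \<in> {l. l \<le> k \<and> m l > 0}" unfolding phi_def using finS ne by (rule Max_in)
  hence "card {j\<in>{0..<N}. ?x j = phi k m} > 0" using config_ok[OF m] by simp
  hence "{j\<in>{0..<N}. ?x j = phi k m} \<noteq> {}" by (metis card.empty less_irrefl)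
  thus "\<exists>b0<N. ?x b0 = phi k m" by auto
qed

lemma step_event:
  assumes m: "m \<in> Omega k N" and N: "N \<ge> 1" and supp: "set_pmf xi \<subseteq> {..k}"
  shows "measure_pmf.prob (Z_step xi k N m) {m'. phi k m' \<le> t}
       = (\<Prod>(a,b)\<in>{0..<N}\<times>{0..<N}. measure_pmf.prob xi {..phi k m + t - config N m b})"
proof -
  define D where "D = {0..<N}\<times>{0..<N}"
  define P where "P = Pi_pmf D 0 (\<lambda>_. xi)"
  define x where "x = config N m"
  define ph where "ph = phi k m"
  define Mx where "Mx = (\<lambda>(e::nat\<times>nat\<Rightarrow>int) (a::nat). Max ((\<lambda>j. x j + e (a, j)) ` {0..<N}))"
  define F where "F = (\<lambda>e. \<lambda>l. if l \<le> k then
                card {i\<in>{0..<N}. Max ((\<lambda>j. config N m j + e (i, j)) ` {0..<N}) = phi k m + l}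
              else (0::nat))"
  define B where "B = (\<lambda>(a::nat,b::nat). {..ph + t - x b})"
  have finD: "finite D" by (simp add: D_def)
  have xle: "\<And>b. b < N \<Longrightarrow> x b \<le> ph" using config_props(1)[OF m N] by (simp add: x_def ph_def)
  have key: "{e. phi k (F e) \<le> t} \<inter> set_pmf P = Pi D B \<inter> set_pmf P"
  proof (intro set_eqI)
    fix e
    show "e \<in> {e. phi k (F e) \<le> t} \<inter> set_pmf P \<longleftrightarrow> e \<in> Pi D B \<inter> set_pmf P"
    proof (cases "e \<in> set_pmf P")
    case False thus ?thesis by auto
    next
    case eP: True
    hence ek: "\<And>a b. a < N \<Longrightarrow> b < N \<Longrightarrow> e (a,b) \<le> k"
      using supp unfolding P_def set_Pi_pmf[OF finD] by (auto simp: PiE_dflt_def D_def)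
    have ne: "(\<lambda>j. x j + e (a, j)) ` {0..<N} \<noteq> {}" for a using N by auto
    have Mle: "Mx e a \<le> ph + k" if "a < N" for a
      unfolding Mx_def using ne[of a] xle ek[OF that] by (auto simp: Max_le_iff intro: add_mono)
    have Fe: "F e = (\<lambda>l. if l \<le> k then card {a\<in>{0..<N}. Mx e a = ph + l} else 0)"
      unfolding F_def Mx_def x_def ph_def by simp
    have S: "{l. l \<le> k \<and> F e l > 0} = (\<lambda>a. Mx e a - ph) ` {0..<N}"
    proof (intro set_eqI iffI)
      fix l assume "l \<in> {l. l \<le> k \<and> F e l > 0}"
      hence "card {a\<in>{0..<N}. Mx e a = ph + l} > 0" by (auto simp: Fe)
      hence "{a\<in>{0..<N}. Mx e a = ph + l} \<noteq> {}" by (metis card.empty less_irrefl)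
      then obtain a where "a < N" "Mx e a = ph + l" by auto
      thus "l \<in> (\<lambda>a. Mx e a - ph) ` {0..<N}" by (auto intro!: image_eqI[of _ _ a])
    next
      fix l assume "l \<in> (\<lambda>a. Mx e a - ph) ` {0..<N}"
      then obtain a where a: "a < N" "l = Mx e a - ph" by auto
      hence lk: "l \<le> k" using Mle[OF a(1)] by simp
      have "a \<in> {a\<in>{0..<N}. Mx e a = ph + l}" using a by auto
      hence "card {a\<in>{0..<N}. Mx e a = ph + l} > 0" by (subst card_gt_0_iff) auto
      thus "l \<in> {l. l \<le> k \<and> F e l > 0}" using lk by (simp add: Fe)
    qed
    have "phi k (F e) \<le> t \<longleftrightarrow> (\<forall>a<N. Mx e a - ph \<le> t)"
      unfolding phi_def S using N by (subst Max_le_iff) auto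
    also have "\<dots> \<longleftrightarrow> (\<forall>a<N. \<forall>b<N. x b + e (a,b) \<le> ph + t)"
    proof -
      have "Mx e a - ph \<le> t \<longleftrightarrow> (\<forall>b<N. x b + e (a,b) \<le> ph + t)" for a
      proof -
        have "Mx e a - ph \<le> t \<longleftrightarrow> Mx e a \<le> ph + t" by arith
        also have "\<dots> \<longleftrightarrow> (\<forall>b<N. x b + e (a,b) \<le> ph + t)"
          unfolding Mx_def by (subst Max_le_iff) (use ne in auto)
        finally show ?thesis .
      qed
      thus ?thesis by simp
    qed
    also have "\<dots> \<longleftrightarrow> e \<in> Pi D B" by (auto simp: D_def B_def Pi_def; smt)
    finally show ?thesis using eP by auto
    qed
  qed
  have "measure_pmf.prob (Z_step xi k N m) {m'. phi k m' \<le> t} = measure_pmf.prob P {e. phi k (F e) \<le> t}"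
    by (simp add: Z_step_def F_def P_def D_def vimage_def)
  also have "\<dots> = measure_pmf.prob P ({e. phi k (F e) \<le> t} \<inter> set_pmf P)"
    by (rule measure_Int_set_pmf[symmetric])
  also have "\<dots> = measure_pmf.prob P (Pi D B)" by (simp only: key measure_Int_set_pmf)
  also have "\<dots> = (\<Prod>z\<in>D. measure_pmf.prob xi (B z))"
    unfolding P_def by (rule measure_Pi_pmf_Pi[OF finD])
  finally show ?thesis by (simp add: D_def B_def x_def ph_def case_prod_unfold)
qed

lemma prod_pair_const:
  "(\<Prod>(a,b)\<in>{0..<N}\<times>{0..<(N::nat)}. (h::nat\<Rightarrow>real) b) = (\<Prod>b\<in>{0..<N}. h b) ^ N"
proof -
  have "(\<Prod>(a,b)\<in>{0..<N}\<times>{0..<(N::nat)}. h b) = (\<Prod>a\<in>{0..<N}. \<Prod>b\<in>{0..<N}. h b)"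
    by (rule prod.cartesian_product[symmetric])
  thus ?thesis by simp
qed

lemma prod_ratio:
  fixes f g :: "nat \<Rightarrow> real"
  assumes "finite B" "b0 \<in> B" "\<And>b. b \<in> B \<Longrightarrow> 0 \<le> f b" "\<And>b. b \<in> B \<Longrightarrow> f b \<le> g b"
    "f b0 = ri" "g b0 = r1" "r1 > 0"
  shows "(\<Prod>b\<in>B. f b) \<le> (ri / r1) * (\<Prod>b\<in>B. g b)"
proof -
  have "(\<Prod>b\<in>B. f b) = f b0 * (\<Prod>b\<in>B - {b0}. f b)" using assms by (simp add: prod.remove)
  also have "\<dots> \<le> ri * (\<Prod>b\<in>B - {b0}. g b)"
    using assms by (auto intro!: mult_left_mono prod_mono)
  also have "\<dots> = (ri / r1) * (r1 * (\<Prod>b\<in>B - {b0}. g b))" using assms by simp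
  also have "r1 * (\<Prod>b\<in>B - {b0}. g b) = (\<Prod>b\<in>B. g b)" using assms by (simp add: prod.remove)
  finally show ?thesis .
qed

theorem lemma6p2:
  fixes xi :: "int pmf" and k :: int and N :: nat and \<nu> :: "(int \<Rightarrow> nat) pmf" and i :: int
  assumes supp: "set_pmf xi \<subseteq> {..k}"
    and pk_pos: "pmf xi k > 0" and pk_lt1: "pmf xi k < 1"
    and N: "N \<ge> 1"
    and inv: "invariant_Z xi k N \<nu>"
    and i: "i \<ge> 2"
  shows "measure_pmf.prob \<nu> {m. phi k m \<le> k - i}
           \<le> (r xi k i / r xi k 1) ^ N * measure_pmf.prob \<nu> {m. phi k m \<le> k - 1}"
proof -
  define c where "c = (r xi k i / r xi k 1) ^ N"
  define A where "A = {m. phi k m \<le> k - i}"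
  define B where "B = {m. phi k m \<le> k - 1}"
  have r1pos: "r xi k 1 > 0"
  proof -
    have "measure_pmf.prob xi {..k} = measure_pmf.prob xi ({..k} \<inter> set_pmf xi)"
      by (rule measure_Int_set_pmf[symmetric])
    also have "{..k} \<inter> set_pmf xi = UNIV \<inter> set_pmf xi" using supp by auto
    also have "measure_pmf.prob xi (UNIV \<inter> set_pmf xi) = 1" by (simp only: measure_Int_set_pmf measure_pmf_UNIV)
    finally have "measure_pmf.prob xi {..k} = 1" .
    moreover have "{..k} = {..k-1} \<union> {k}" by auto
    moreover have "measure_pmf.prob xi ({..k-1} \<union> {k}) = measure_pmf.prob xi {..k-1} + measure_pmf.prob xi {k}"
      by (rule measure_pmf.finite_measure_Union) auto
    ultimately have "measure_pmf.prob xi {..k-1} = 1 - pmf xi k" by (simp add: measure_pmf_single)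
    thus ?thesis using pk_lt1 by (simp add: r_def)
  qed
  have cpos: "c \<ge> 0" unfolding c_def using r1pos by (simp add: r_def)
  have ptw: "measure_pmf.prob (Z_step xi k N m) A \<le> c * measure_pmf.prob (Z_step xi k N m) B"
    if m: "m \<in> Omega k N" for m
  proof -
    define x where "x = config N m"
    define ph where "ph = phi k m"
    define f where "f = (\<lambda>b. measure_pmf.prob xi {..ph + (k - i) - x b})"
    define g where "g = (\<lambda>b. measure_pmf.prob xi {..ph + (k - 1) - x b})"
    obtain b0 where b0: "b0 < N" "x b0 = ph" using config_props(2)[OF m N] by (auto simp: x_def ph_def)
    have "measure_pmf.prob (Z_step xi k N m) A = (\<Prod>(a,b)\<in>{0..<N}\<times>{0..<N}. f b)"
      unfolding A_def f_def x_def ph_def by (rule step_event[OF m N supp])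
    also have "\<dots> = (\<Prod>b\<in>{0..<N}. f b) ^ N" by (rule prod_pair_const)
    also have "\<dots> \<le> ((r xi k i / r xi k 1) * (\<Prod>b\<in>{0..<N}. g b)) ^ N"
    proof (rule power_mono)
      show "(\<Prod>b\<in>{0..<N}. f b) \<le> (r xi k i / r xi k 1) * (\<Prod>b\<in>{0..<N}. g b)"
      proof (rule prod_ratio)
        show "f b \<le> g b" if "b \<in> {0..<N}" for b
          unfolding f_def g_def using i by (intro measure_pmf.finite_measure_mono) auto
        show "finite {0..<N}" by simp
        show "b0 \<in> {0..<N}" using b0 by simp
        show "0 \<le> f b" if "b \<in> {0..<N}" for b by (simp add: f_def)
        show "f b0 = r xi k i" unfolding f_def r_def b0(2) by simp
        show "g b0 = r xi k 1" unfolding g_def r_def b0(2) by simp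
        show "r xi k 1 > 0" by (rule r1pos)
      qed
      show "0 \<le> (\<Prod>b\<in>{0..<N}. f b)" by (auto simp: f_def intro: prod_nonneg)
    qed
    also have "\<dots> = c * (\<Prod>b\<in>{0..<N}. g b) ^ N" unfolding c_def by (rule power_mult_distrib)
    also have "(\<Prod>b\<in>{0..<N}. g b) ^ N = (\<Prod>(a,b)\<in>{0..<N}\<times>{0..<N}. g b)" by (rule prod_pair_const[symmetric])
    also have "\<dots> = measure_pmf.prob (Z_step xi k N m) B"
      unfolding B_def g_def x_def ph_def by (rule step_event[OF m N supp, symmetric])
    finally show ?thesis .
  qed
  have eq: "bind_pmf \<nu> (Z_step xi k N) = \<nu>" and sub: "set_pmf \<nu> \<subseteq> Omega k N"
    using inv by (auto simp: invariant_Z_def)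
  have "emeasure (measure_pmf \<nu>) A = emeasure (measure_pmf (bind_pmf \<nu> (Z_step xi k N))) A"
    by (simp only: eq)
  also have "\<dots> = (\<integral>\<^sup>+m. emeasure (Z_step xi k N m) A \<partial>\<nu>)" by simp
  also have "\<dots> \<le> (\<integral>\<^sup>+m. ennreal c * emeasure (Z_step xi k N m) B \<partial>\<nu>)"
  proof (rule nn_integral_mono_AE, rule AE_pmfI)
    fix m assume "m \<in> set_pmf \<nu>"
    hence "m \<in> Omega k N" using sub by auto
    from ptw[OF this] cpos show "emeasure (Z_step xi k N m) A \<le> ennreal c * emeasure (Z_step xi k N m) B"
      by (simp add: measure_pmf.emeasure_eq_measure ennreal_mult[symmetric] ennreal_leI)
  qed
  also have "\<dots> = ennreal c * (\<integral>\<^sup>+m. emeasure (Z_step xi k N m) B \<partial>\<nu>)"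
    by (rule nn_integral_cmult) simp
  also have "(\<integral>\<^sup>+m. emeasure (Z_step xi k N m) B \<partial>\<nu>) = emeasure (measure_pmf (bind_pmf \<nu> (Z_step xi k N))) B"
    by simp
  also have "\<dots> = emeasure (measure_pmf \<nu>) B" by (simp only: eq)
  finally have "ennreal (measure_pmf.prob \<nu> A) \<le> ennreal (c * measure_pmf.prob \<nu> B)"
    using cpos by (simp add: measure_pmf.emeasure_eq_measure ennreal_mult)
  hence "measure_pmf.prob \<nu> A \<le> c * measure_pmf.prob \<nu> B"
    using cpos by (subst (asm) ennreal_le_iff) auto
  thus ?thesis by (simp add: A_def B_def c_def)
qed

end
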